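(* Let $h_1,h_2$ be real numbers. The polynomial $h(t)=1+h_1t+h_2t^2+h_1t^3+t^4$ has only real negative roots if and only if $h_2-2h_1+2\geq0$, $h_1^2-4(h_2-2)\geq0$, and $h_1\geq4$. *)

theory Defs
  imports "HOL-Analysis.Analysis" "HOL-Computational_Algebra.Polynomial"
begin

definition hpoly :: "real \<Rightarrow> real \<Rightarrow> real poly" where
  "hpoly h1 h2 = [:1, h1, h2, h1, 1:]"

end

theory Submission
  imports Defs
begin

lemma P: "poly (map_poly complex_of_real (hpoly h1 h2)) z = 1 + h1*z + h2*z^2 + h1*z^3 + z^4"
  by (simp add: hpoly_def map_poly_pCons algebra_simps power2_eq_square power3_eq_cube power4_eq_xxxx)

lemma quad_root_real:
  fixes \<sigma> :: complex
  assumes H: "\<forall>z::complex. poly (map_poly complex_of_real (hpoly h1 h2)) z = 0 \<longrightarrow>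
            z \<in> \<real> \<and> Re z < 0"
    and Q: "\<sigma>^2 + of_real h1*\<sigma> + (h2 - 2) = 0"
  shows "\<sigma> = of_real (Re \<sigma>) \<and> Re \<sigma> \<le> -2"
proof -
  define z where "z = (\<sigma> + csqrt (\<sigma>^2-4))/2"
  have c: "(csqrt (\<sigma>^2-4))^2 = \<sigma>^2 - 4" by (rule power2_csqrt)
  have "4*(z^2 - \<sigma>*z + 1) = (csqrt (\<sigma>^2-4))^2 - (\<sigma>^2 - 4)"
    unfolding z_def by (simp add: power2_eq_square field_simps)
  hence z1: "z^2 - \<sigma>*z + 1 = 0" using c by (metis diff_self mult_eq_0_iff zero_neq_numeral)
  have id: "1 + h1*z + h2*z^2 + h1*z^3 + z^4 =
     (z^2-\<sigma>*z+1)*(z^2+(h1+\<sigma>)*z+1) + (\<sigma>^2 + of_real h1*\<sigma> + (h2 - 2))*z^2"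
    by (simp add: algebra_simps power2_eq_square power3_eq_cube power4_eq_xxxx)
  have "poly (map_poly complex_of_real (hpoly h1 h2)) z = 0"
    unfolding P id z1 Q by simp
  with H have zr: "z \<in> \<real>" "Re z < 0" by auto
  then obtain x where x: "z = of_real x" by (auto elim: Reals_cases)
  with zr have xn: "x < 0" by simp
  have "\<sigma> * z = z^2 + 1" using z1 by (simp add: algebra_simps)
  hence "\<sigma> = (z^2+1)/z" using xn x by (simp add: field_simps)
  hence s: "\<sigma> = of_real ((x^2+1)/x)" using x by simp
  have "(x^2+1)/x \<le> -2"
  proof -
    have "x^2 + 1 \<ge> -2*x" using sum_squares_ge_zero[of "x+1" 0] by (simp add: power2_eq_square algebra_simps)
    hence "x^2+1 \<ge> (-2)*x" by simp
    thus ?thesis using xn by (simp add: divide_le_eq)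
  qed
  thus ?thesis using s by simp
qed

theorem lemma3p2p3:
  fixes h1 h2 :: real
  shows "(\<forall>z::complex. poly (map_poly complex_of_real (hpoly h1 h2)) z = 0 \<longrightarrow>
            z \<in> \<real> \<and> Re z < 0)
         \<longleftrightarrow> (h2 - 2 * h1 + 2 \<ge> 0 \<and> h1\<^sup>2 - 4 * (h2 - 2) \<ge> 0 \<and> h1 \<ge> 4)"
proof
  assume H: "\<forall>z::complex. poly (map_poly complex_of_real (hpoly h1 h2)) z = 0 \<longrightarrow>
            z \<in> \<real> \<and> Re z < 0"
  define D where "D = complex_of_real (h1^2 - 4*(h2-2))"
  have c: "(csqrt D)^2 = D" by (rule power2_csqrt)
  define s1 where "s1 = (- of_real h1 + csqrt D)/2"
  define s2 where "s2 = (- of_real h1 - csqrt D)/2"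
  have "4*(s1^2 + of_real h1 * s1 + (h2 - 2)) = (csqrt D)^2 - D"
    unfolding s1_def D_def by (simp add: power2_eq_square field_simps)
  hence q1: "s1^2 + of_real h1 * s1 + (h2 - 2) = 0" using c by (metis diff_self mult_eq_0_iff zero_neq_numeral)
  have "4*(s2^2 + of_real h1 * s2 + (h2 - 2)) = (csqrt D)^2 - D"
    unfolding s2_def D_def by (simp add: power2_eq_square field_simps)
  hence q2: "s2^2 + of_real h1 * s2 + (h2 - 2) = 0" using c by (metis diff_self mult_eq_0_iff zero_neq_numeral)
  obtain a where a: "s1 = of_real a" "a \<le> -2" using quad_root_real[OF H q1] by blast
  obtain b where b: "s2 = of_real b" "b \<le> -2" using quad_root_real[OF H q2] by blast
  have "complex_of_real h1 = - (s1 + s2)" by (simp add: s1_def s2_def field_simps)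
  hence h1e: "h1 = -(a+b)" using a b by (metis of_real_add of_real_eq_iff of_real_minus)
  have "csqrt D = s1 - s2" by (simp add: s1_def s2_def field_simps)
  hence "D = (of_real (a - b))^2" using c a b by simp
  hence "complex_of_real (h1^2 - 4*(h2-2)) = of_real ((a-b)^2)" unfolding D_def by simp
  hence De: "h1^2 - 4*(h2-2) = (a-b)^2" using of_real_eq_iff by blast
  have h2e: "h2 = 2 + a*b" using De h1e by (simp add: power2_eq_square algebra_simps)
  have "(a+2)*(b+2) \<ge> 0" using a b by (simp add: mult_nonpos_nonpos)
  thus "h2 - 2 * h1 + 2 \<ge> 0 \<and> h1\<^sup>2 - 4 * (h2 - 2) \<ge> 0 \<and> h1 \<ge> 4"
    using h1e h2e De a b by (auto simp: algebra_simps)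
next
  assume C: "h2 - 2 * h1 + 2 \<ge> 0 \<and> h1\<^sup>2 - 4 * (h2 - 2) \<ge> 0 \<and> h1 \<ge> 4"
  define d where "d = sqrt (h1\<^sup>2 - 4 * (h2 - 2))"
  have d0: "d \<ge> 0" and d2: "d^2 = h1\<^sup>2 - 4 * (h2 - 2)" using C by (auto simp: d_def)
  define s1 where "s1 = (-h1 + d)/2"
  define s2 where "s2 = (-h1 - d)/2"
  have "d^2 \<le> (h1 - 4)^2" using C d2 by (simp add: power2_eq_square algebra_simps)
  moreover have "0 \<le> h1 - 4" using C by linarith
  ultimately have "d \<le> h1 - 4" by (rule power2_le_imp_le)
  hence s1n: "s1 \<le> -2" unfolding s1_def by (simp add: field_simps)
  hence s2n: "s2 \<le> -2" unfolding s2_def using d0 \<open>s1 \<le> -2\<close> s1_def by (simp add: field_simps)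
  have key: "\<And>s::real. \<And>z::complex. s \<le> -2 \<Longrightarrow> z^2 - of_real s*z + 1 = 0 \<Longrightarrow> z \<in> \<real> \<and> Re z < 0"
  proof -
    fix s :: real and z :: complex
    assume sn: "s \<le> -2" and e: "z^2 - of_real s*z + 1 = 0"
    define r where "r = sqrt (s^2 - 4)"
    have "2*2 \<le> (-s)*(-s)" using sn by (intro mult_mono) auto
    hence s4: "4 \<le> s^2" by (simp add: power2_eq_square)
    have r0: "r \<ge> 0" and r2: "r^2 = s^2 - 4" using s4 by (auto simp: r_def)
    have "r^2 < s^2" using r2 by simp
    hence "r^2 < (-s)^2" by simp
    moreover have "0 \<le> -s" using sn by simp
    ultimately have rs: "r < -s" by (rule power2_less_imp_less)
    have "(z - of_real ((s+r)/2)) * (z - of_real ((s-r)/2)) = z^2 - of_real s*z + of_real ((s^2 - r^2)/4)"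
      by (simp add: algebra_simps power2_eq_square field_simps)
    also have "\<dots> = 0" using e r2 by simp
    finally have "z = of_real ((s+r)/2) \<or> z = of_real ((s-r)/2)" by simp
    moreover have "(s+r)/2 < 0" "(s-r)/2 < 0" using rs r0 by (simp_all add: field_simps)
    moreover have A: "\<And>q. z = of_real q \<Longrightarrow> q < 0 \<Longrightarrow> z \<in> \<real> \<and> Re z < 0" by simp
    ultimately show "z \<in> \<real> \<and> Re z < 0" by (metis A)
  qed
  show "\<forall>z::complex. poly (map_poly complex_of_real (hpoly h1 h2)) z = 0 \<longrightarrow>
            z \<in> \<real> \<and> Re z < 0"
  proof (intro allI impI)
    fix z :: complex
    assume "poly (map_poly complex_of_real (hpoly h1 h2)) z = 0"
    hence "1 + h1*z + h2*z^2 + h1*z^3 + z^4 = 0" by (simp add: P)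
    moreover have "1 + h1*z + h2*z^2 + h1*z^3 + z^4 = (z^2 - of_real s1*z + 1)*(z^2 - of_real s2*z + 1)"
    proof -
      have e1: "s1 + s2 = -h1" unfolding s1_def s2_def by (simp add: field_simps)
      have e2: "s1 * s2 = h2 - 2" unfolding s1_def s2_def using d2 by (simp add: field_simps power2_eq_square)
      have "(z^2 - of_real s1*z + 1)*(z^2 - of_real s2*z + 1)
          = z^4 - of_real (s1+s2) * z^3 + (2 + of_real (s1 * s2))*z^2 - of_real (s1+s2)*z + 1"
        by (simp add: algebra_simps power2_eq_square power3_eq_cube power4_eq_xxxx)
      thus ?thesis unfolding e1 e2 by (simp add: algebra_simps)
    qed
    ultimately have "z^2 - of_real s1*z + 1 = 0 \<or> z^2 - of_real s2*z + 1 = 0" by simp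
    thus "z \<in> \<real> \<and> Re z < 0" using key s1n s2n by blast
  qed
qed

end
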